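(* Let $A$ be an infinite set, fix $z\in A$, $A'=A\setminus\{z\}$, and $p\in[1,\infty)$. Let $\alpha^n=a_1^na_2^n\ldots\in N(A)$ for $n\in\mathbb{N}^*$ and $x_n=p_p(\alpha^n)$. Suppose there are $n_0\in\mathbb{N}^*$, $n_0\ge 2$, and $a,b\in A$ with $a\neq b$ such that $\alpha=a_1a_2\ldots a_{n_0-1}abbb\ldots\in N(A)$ (i.e. the $n_0$-th letter is $a$ and all later letters are $b$), and let $x=p_p(\alpha)$. If $\lim_{n\to\infty}\|x_n-x\|_p=0$, then for every $m\in\mathbb{N}^*$ with $m>n_0+1$ there exists $l_m\in\mathbb{N}^*$ such that for every $l\ge l_m$ one of the following holds: (i) $a_i^l=a_i$ for $i=1,\ldots,n_0-1$, $a_{n_0}^l=a$, and $a_{n_0+1}^l=\cdots=a_m^l=b$; (ii) $a_i^l=a_i$ for $i=1,\ldots,n_0-1$, $a_{n_0}^l=b$, and $a_{n_0+1}^l=\cdots=a_m^l=a$.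
   Context: $l^p(A)$ is the set of families $x=(x_a)_{a\in A'}$ of real numbers with $x_a=0$ for all but countably many $a$ and $\sum_a|x_a|^p<\infty$, with norm $\|x\|_p=(\sum_a|x_a|^p)^{1/p}$. $N(A)$ is the set of all sequences $\alpha=a_1a_2a_3\ldots$ with $a_k\in A$. The map $p_p:N(A)\to l^p(A)$ is $p_p(\alpha)=(\alpha_c)_{c\in A'}$ where, for $\alpha=a_1a_2\ldots$, $\alpha_c=\sum_{k:\,a_k=c}2^{-k}$ (and $\alpha_c=0$ if no $a_k$ equals $c$). *)

theory Defs
  imports "HOL-Analysis.Analysis"
begin

text \<open>Words in N(A) are represented as functions nat \<Rightarrow> 'a, letters at positions 1,2,3,...
  (position 0 unused). A word alpha lies in N(A) iff alpha k \<in> A for all k \<ge> 1.\<close>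

definition inN :: "'a set \<Rightarrow> (nat \<Rightarrow> 'a) \<Rightarrow> bool" where
  "inN A \<alpha> \<longleftrightarrow> (\<forall>k\<ge>1. \<alpha> k \<in> A)"

definition pp :: "'a set \<Rightarrow> 'a \<Rightarrow> (nat \<Rightarrow> 'a) \<Rightarrow> 'a \<Rightarrow> real" where
  "pp A z \<alpha> = (\<lambda>c. if c \<in> A - {z}
       then (\<Sum>k. if \<alpha> (Suc k) = c then (1/2) ^ Suc k else 0) else 0)"

definition lp_norm :: "real \<Rightarrow> 'a set \<Rightarrow> ('a \<Rightarrow> real) \<Rightarrow> real" where
  "lp_norm p I x = (infsum (\<lambda>c. \<bar>x c\<bar> powr p) I) powr (1 / p)"

end

theory Submission
  imports Defs
begin

definition gw :: "(nat \<Rightarrow> 'a) \<Rightarrow> 'a \<Rightarrow> nat \<Rightarrow> real" where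
  "gw \<beta> e k = (if \<beta> k = e then (1/2)^k else 0)"

definition RR :: "(nat \<Rightarrow> 'a) \<Rightarrow> 'a \<Rightarrow> nat \<Rightarrow> real" where
  "RR \<beta> e i = (\<Sum>n. gw \<beta> e (n + i))"

lemma geo_sums: "(\<lambda>n. (1/2::real)^(n+i)) sums (2*(1/2)^i)"
proof -
  have "(\<lambda>n. (1/2::real)^i * (1/2)^n) sums ((1/2)^i * (1 / (1 - 1/2)))"
    by (intro sums_mult geometric_sums) auto
  thus ?thesis by (simp add: power_add mult.commute)
qed

lemma gw_nonneg: "0 \<le> gw \<beta> e k" by (simp add: gw_def)
lemma gw_le: "gw \<beta> e k \<le> (1/2)^k" by (simp add: gw_def)

lemma gw_summable: "summable (\<lambda>n. gw \<beta> e (n + i))"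
  by (rule summable_comparison_test[OF _ sums_summable[OF geo_sums[of i]]])
     (auto simp: gw_def)

lemma RR_nonneg: "0 \<le> RR \<beta> e i"
  unfolding RR_def by (intro suminf_nonneg gw_summable gw_nonneg)

lemma RR_le: "RR \<beta> e i \<le> 2*(1/2)^i"
  unfolding RR_def using suminf_le[OF _ gw_summable sums_summable[OF geo_sums[of i]]]
    sums_unique[OF geo_sums[of i]] gw_le by (metis)

lemma RR_step: "RR \<beta> e i = gw \<beta> e i + RR \<beta> e (Suc i)"
proof -
  have "RR \<beta> e i = (\<Sum>n. gw \<beta> e (n + 1 + i)) + (\<Sum>n<1. gw \<beta> e (n + i))"
    unfolding RR_def by (rule suminf_split_initial_segment[OF gw_summable])
  thus ?thesis by (simp add: RR_def)
qed

lemma RR_all: "\<forall>k\<ge>i. \<beta> k = e \<Longrightarrow> RR \<beta> e i = 2*(1/2)^i"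
proof -
  assume h: "\<forall>k\<ge>i. \<beta> k = e"
  have "(\<lambda>n. gw \<beta> e (n + i)) = (\<lambda>n. (1/2)^(n+i))" using h by (auto simp: gw_def)
  thus ?thesis unfolding RR_def using sums_unique[OF geo_sums[of i]] by simp
qed

lemma RR_none: "\<forall>k\<ge>i. \<beta> k \<noteq> e \<Longrightarrow> RR \<beta> e i = 0"
proof -
  assume h: "\<forall>k\<ge>i. \<beta> k \<noteq> e"
  have "(\<lambda>n. gw \<beta> e (n + i)) = (\<lambda>n. 0)" using h by (auto simp: gw_def)
  thus ?thesis unfolding RR_def by simp
qed

lemma RR_ge: assumes "j \<ge> i" "\<beta> j = e" shows "RR \<beta> e i \<ge> (1/2)^j"
proof -
  have s: "(\<lambda>n. if n = j - i then gw \<beta> e (n + i) else 0) sums gw \<beta> e (j - i + i)"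
    by (rule sums_single)
  have "gw \<beta> e (j - i + i) \<le> RR \<beta> e i" unfolding RR_def
    by (rule sums_le[OF _ s summable_sums[OF gw_summable]]) (auto simp: gw_nonneg)
  thus ?thesis using assms by (simp add: gw_def)
qed

lemma RR_le_miss: assumes "j \<ge> i" "\<beta> j \<noteq> e" shows "RR \<beta> e i \<le> 2*(1/2)^i - (1/2)^j"
proof -
  have s: "(\<lambda>n. if n = j - i then (1/2::real)^(n+i) else 0) sums (1/2)^(j - i + i)"
    by (rule sums_single[of _ "\<lambda>n. (1/2::real)^(n+i)", simplified])
  have t: "(\<lambda>n. gw \<beta> e (n + i) + (if n = j - i then (1/2::real)^(n+i) else 0)) sums (RR \<beta> e i + (1/2)^(j - i + i))"
    unfolding RR_def by (intro sums_add summable_sums[OF gw_summable] s)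
  have "RR \<beta> e i + (1/2)^(j - i + i) \<le> 2*(1/2)^i"
    by (rule sums_le[OF _ t geo_sums]) (use assms in \<open>auto simp: gw_def\<close>)
  thus ?thesis using assms by simp
qed

lemma RR_prefix: "j \<le> i \<Longrightarrow> RR \<beta> e j = (\<Sum>k\<in>{j..<i}. gw \<beta> e k) + RR \<beta> e i"
proof (induction i)
  case 0 thus ?case by simp
next
  case (Suc i)
  show ?case
  proof (cases "j = Suc i")
    case False
    hence "j \<le> i" using Suc by auto
    thus ?thesis using Suc RR_step[of \<beta> e i] by simp
  qed simp
qed

lemma RR_skip: "\<forall>k\<in>{i..<N}. \<beta> k \<noteq> e \<Longrightarrow> i \<le> N \<Longrightarrow> RR \<beta> e i = RR \<beta> e N"
  using RR_prefix[of i N \<beta> e] by (simp add: gw_def)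

lemma half_pow_mono: "k \<le> n \<Longrightarrow> (1/2::real)^n \<le> (1/2)^k"
  by (rule power_decreasing) auto

lemma half_Suc: "2*(1/2::real)^(Suc i) = (1/2)^i" by simp

lemma comb:
  fixes \<alpha> \<beta> :: "nat \<Rightarrow> 'a"
  assumes iB: "inN A \<beta>" and iA: "inN A \<alpha>" and n0: "n0 \<ge> 2" and ab: "a \<noteq> b"
    and an0: "\<alpha> n0 = a" and tl: "\<forall>k>n0. \<alpha> k = b" and m: "m > n0 + 1"
    and H: "\<forall>e\<in>A-{z}. \<bar>RR \<beta> e 1 - RR \<alpha> e 1\<bar> < (1/2)^(m+2)"
  shows "((\<forall>i\<in>{1..<n0}. \<beta> i = \<alpha> i) \<and> \<beta> n0 = a \<and> (\<forall>i\<in>{n0<..m}. \<beta> i = b))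
    \<or> ((\<forall>i\<in>{1..<n0}. \<beta> i = \<alpha> i) \<and> \<beta> n0 = b \<and> (\<forall>i\<in>{n0<..m}. \<beta> i = a))"
proof (cases "\<forall>j\<in>{1..m}. \<beta> j = \<alpha> j")
  case True
  thus ?thesis using an0 tl m n0 by (auto simp: Ball_def)
next
  case False
  define E where "E = (1/2::real)^(m+2)"
  have E2: "(1/2::real)^(m+1) = 2*E" "(1/2::real)^m = 4*E" "E > 0" unfolding E_def by auto
  define P where "P j = (1 \<le> j \<and> j \<le> m \<and> \<beta> j \<noteq> \<alpha> j)" for j
  have "\<exists>j. P j" using False unfolding P_def by auto
  then obtain i where Pi: "P i" and lt: "\<And>j. j < i \<Longrightarrow> \<not> P j"
    using exists_least_iff[of P] by blast
  have i1: "1 \<le> i" "i \<le> m" "\<beta> i \<noteq> \<alpha> i" using Pi P_def by auto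
  have pre: "\<forall>j\<in>{1..<i}. \<beta> j = \<alpha> j" using lt i1 unfolding P_def by force
  have K: "\<bar>RR \<beta> e i - RR \<alpha> e i\<bar> < E" if "e \<in> A-{z}" for e
  proof -
    have "(\<Sum>k\<in>{1..<i}. gw \<beta> e k) = (\<Sum>k\<in>{1..<i}. gw \<alpha> e k)"
      using pre by (intro sum.cong) (auto simp: gw_def)
    moreover have "\<bar>RR \<beta> e 1 - RR \<alpha> e 1\<bar> < E" using H that unfolding E_def by blast
    ultimately show ?thesis using RR_prefix[of 1 i \<beta> e] RR_prefix[of 1 i \<alpha> e] i1
      by simp
  qed
  have K2: "RR \<beta> e i - RR \<alpha> e i < E \<and> RR \<alpha> e i - RR \<beta> e i < E" if "e \<in> A-{z}" for e
    using K[OF that] by linarith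
  define c where "c = \<alpha> i"
  define d where "d = \<beta> i"
  have cd: "c \<noteq> d" using i1 c_def d_def by auto
  have cA: "c \<in> A" "d \<in> A" using iA iB i1 c_def d_def unfolding inN_def by auto
  have gw0: "gw \<gamma> e j = 0" if "\<gamma> j \<noteq> e" for \<gamma> :: "nat \<Rightarrow> 'a" and e j
    using that by (simp add: gw_def)
  have gw1: "gw \<gamma> e j = (1/2)^j" if "\<gamma> j = e" for \<gamma> :: "nat \<Rightarrow> 'a" and e j
    using that by (simp add: gw_def)
  show ?thesis
  proof (cases "d = z")
    case False
    hence dA: "d \<in> A - {z}" using cA by auto
    have "RR \<beta> d i \<ge> (1/2)^i" using RR_ge[of i i \<beta> d] d_def by simp
    hence lo: "RR \<alpha> d i > (1/2)^i - E" using K2[OF dA] by linarith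
    have \<alpha>d: "\<alpha> k = d" if "k \<in> {Suc i..m+1}" for k
    proof (rule ccontr)
      assume "\<alpha> k \<noteq> d"
      hence "RR \<alpha> d (Suc i) \<le> 2*(1/2)^(Suc i) - (1/2)^k"
        using RR_le_miss[of "Suc i" k \<alpha> d] that by auto
      moreover have "RR \<alpha> d i = RR \<alpha> d (Suc i)" using RR_step[of \<alpha> d i] gw0[of \<alpha> i d] cd c_def by auto
      moreover have "(1/2::real)^(m+1) \<le> (1/2)^k" by (rule half_pow_mono) (use that in auto)
      ultimately show False using lo E2 half_Suc[of i] by linarith
    qed
    have iEq: "i = n0"
    proof (rule ccontr)
      assume "i \<noteq> n0"
      then consider "i < n0" | "i > n0" by linarith
      thus False
      proof cases
        case 1 thus False using \<alpha>d[of n0] \<alpha>d[of "Suc n0"] an0 tl ab m i1 by auto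
      next
        case 2 thus False using \<alpha>d[of "Suc i"] tl cd c_def i1 by auto
      qed
    qed
    have ca: "c = a" using c_def iEq an0 by simp
    have db: "d = b" using \<alpha>d[of "Suc n0"] tl iEq m by auto
    have rest: "\<forall>j\<in>{n0<..m}. \<beta> j = a"
    proof (cases "a = z")
      case False
      hence aA: "a \<in> A - {z}" using cA ca by auto
      have "RR \<alpha> a n0 = (1/2)^n0 + RR \<alpha> a (Suc n0)"
        using RR_step[of \<alpha> a n0] gw1[of \<alpha> n0 a] an0 by simp
      moreover have "RR \<alpha> a (Suc n0) = 0" using RR_none[of "Suc n0" \<alpha> a] tl ab by auto
      moreover have "RR \<beta> a n0 = RR \<beta> a (Suc n0)"
        using RR_step[of \<beta> a n0] gw0[of \<beta> n0 a] d_def db iEq ab by auto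
      ultimately have lo2: "RR \<beta> a (Suc n0) > (1/2)^n0 - E" using K2[OF aA] iEq by simp
      show ?thesis
      proof (rule ccontr)
        assume "\<not> ?thesis"
        then obtain j where j: "j \<in> {n0<..m}" "\<beta> j \<noteq> a" by auto
        hence "RR \<beta> a (Suc n0) \<le> 2*(1/2)^(Suc n0) - (1/2)^j"
          using RR_le_miss[of "Suc n0" j \<beta> a] by auto
        moreover have "(1/2::real)^m \<le> (1/2)^j" by (rule half_pow_mono) (use j in auto)
        ultimately show False using lo2 E2 half_Suc[of n0] by linarith
      qed
    next
      case True
      show ?thesis
      proof (rule ccontr)
        assume "\<not> ?thesis"
        then obtain j where j: "j \<in> {n0<..m}" "\<beta> j \<noteq> a" by auto
        define e where "e = \<beta> j"
        have eA: "e \<in> A - {z}" using j True iB n0 unfolding inN_def e_def by auto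
        have pj: "(1/2::real)^m \<le> (1/2)^j" by (rule half_pow_mono) (use j in auto)
        show False
        proof (cases "e = b")
          case True
          have "RR \<beta> b n0 = (1/2)^n0 + RR \<beta> b (Suc n0)"
            using RR_step[of \<beta> b n0] gw1[of \<beta> n0 b] d_def db iEq by simp
          moreover have "RR \<beta> b (Suc n0) \<ge> (1/2)^j" using RR_ge[of "Suc n0" j \<beta> b] j True e_def by auto
          moreover have "RR \<alpha> b n0 = RR \<alpha> b (Suc n0)"
            using RR_step[of \<alpha> b n0] gw0[of \<alpha> n0 b] an0 ab by simp
          moreover have "RR \<alpha> b (Suc n0) = 2*(1/2)^(Suc n0)" using RR_all[of "Suc n0" \<alpha> b] tl by auto
          moreover have "RR \<beta> b n0 - RR \<alpha> b n0 < E" using K2[of b] eA True iEq e_def by simp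
          ultimately show False using E2 pj half_Suc[of n0] by linarith
        next
          case False
          have "RR \<beta> e n0 \<ge> (1/2)^j" using RR_ge[of n0 j \<beta> e] j e_def by auto
          moreover have "RR \<alpha> e n0 = 0"
            using RR_none[of n0 \<alpha> e] tl an0 True False eA
            by (metis Diff_iff insertCI le_neq_implies_less)
          moreover have "RR \<beta> e n0 - RR \<alpha> e n0 < E" using K2[OF eA] iEq by simp
          ultimately show False using E2 pj by linarith
        qed
      qed
    qed
    show ?thesis using pre iEq d_def db rest by auto
  next
    case True
    hence cA': "c \<in> A - {z}" using cA cd by auto
    have \<beta>i: "RR \<beta> c i = RR \<beta> c (Suc i)" using RR_step[of \<beta> c i] gw0[of \<beta> i c] cd d_def by auto
    have \<alpha>lo: "RR \<alpha> c i = (1/2)^i + RR \<alpha> c (Suc i)"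
      using RR_step[of \<alpha> c i] gw1[of \<alpha> i c] c_def by auto
    have \<beta>c: "\<beta> k = c" if "k \<in> {Suc i..m+1}" for k
    proof (rule ccontr)
      assume "\<beta> k \<noteq> c"
      hence "RR \<beta> c (Suc i) \<le> 2*(1/2)^(Suc i) - (1/2)^k"
        using RR_le_miss[of "Suc i" k \<beta> c] that by auto
      moreover have "(1/2::real)^(m+1) \<le> (1/2)^k" by (rule half_pow_mono) (use that in auto)
      ultimately show False using K2[OF cA'] \<beta>i \<alpha>lo RR_nonneg[of \<alpha> c "Suc i"] E2 half_Suc[of i] by linarith
    qed
    have \<alpha>c: "\<alpha> k \<noteq> c" if "k \<in> {Suc i..m+1}" for k
    proof
      assume "\<alpha> k = c"
      hence "RR \<alpha> c (Suc i) \<ge> (1/2)^k" using RR_ge[of "Suc i" k \<alpha> c] that by auto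
      moreover have "(1/2::real)^(m+1) \<le> (1/2)^k" by (rule half_pow_mono) (use that in auto)
      moreover have "RR \<beta> c (Suc i) \<le> 2*(1/2)^(Suc i)" by (rule RR_le)
      ultimately show False using K2[OF cA'] \<beta>i \<alpha>lo E2 half_Suc[of i] by linarith
    qed
    have \<alpha>z: "\<alpha> k = z" if "k \<in> {Suc i..m}" for k
    proof (rule ccontr)
      assume nz: "\<alpha> k \<noteq> z"
      define e where "e = \<alpha> k"
      have eA: "e \<in> A - {z}" using nz iA that unfolding inN_def e_def by auto
      have ec: "e \<noteq> c" using \<alpha>c[of k] that e_def by auto
      have "RR \<beta> e i = RR \<beta> e (m+2)"
      proof (rule RR_skip)
        show "\<forall>k\<in>{i..<m+2}. \<beta> k \<noteq> e"
        proof
          fix k assume "k \<in> {i..<m+2}"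
          then consider "k = i" | "k \<in> {Suc i..m+1}" by force
          thus "\<beta> k \<noteq> e" proof cases
            case 1 thus ?thesis using True d_def eA by auto
          next
            case 2 thus ?thesis using \<beta>c ec by auto
          qed
        qed
      qed (use i1 in auto)
      moreover have "RR \<beta> e (m+2) \<le> 2*(1/2)^(m+2)" by (rule RR_le)
      moreover have "RR \<alpha> e i \<ge> (1/2)^k" using RR_ge[of i k \<alpha> e] that e_def by auto
      moreover have "(1/2::real)^m \<le> (1/2)^k" by (rule half_pow_mono) (use that in auto)
      moreover have "2*(1/2::real)^(m+2) = 2*E" unfolding E_def by simp
      ultimately show False using K2[OF eA] E2 by linarith
    qed
    have iEq: "i = n0"
    proof (rule ccontr)
      assume "i \<noteq> n0"
      then consider "i < n0" | "i > n0" by linarith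
      thus False
      proof cases
        case 1 thus False using \<alpha>z[of n0] \<alpha>z[of "Suc n0"] an0 tl ab m i1 by auto
      next
        case 2 thus False using \<alpha>c[of "Suc i"] tl c_def i1 by auto
      qed
    qed
    have bz: "b = z" using \<alpha>z[of "Suc n0"] tl iEq m by auto
    show ?thesis using pre iEq d_def True bz \<beta>c c_def an0 by auto
  qed
qed

lemma pp_eq: "c \<in> A - {z} \<Longrightarrow> pp A z \<beta> c = RR \<beta> c 1"
  unfolding pp_def RR_def gw_def Suc_eq_plus1 by simp

lemma RR_sum_le: "finite F \<Longrightarrow> (\<Sum>c\<in>F. RR \<beta> c 1) \<le> 1"
proof -
  assume F: "finite F"
  have "(\<Sum>c\<in>F. RR \<beta> c 1) = (\<Sum>n. \<Sum>c\<in>F. gw \<beta> c (n + 1))"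
    unfolding RR_def by (rule suminf_sum[symmetric]) (rule gw_summable)
  also have "\<dots> \<le> (\<Sum>n. (1/2::real)^(n+1))"
  proof (rule suminf_le)
    show "\<And>n. (\<Sum>c\<in>F. gw \<beta> c (n + 1)) \<le> (1/2)^(n+1)"
    proof -
      fix n
      have "(\<Sum>c\<in>F. gw \<beta> c (n + 1)) = (if \<beta> (n+1) \<in> F then (1/2)^(n+1) else 0)"
        unfolding gw_def using F by (simp add: sum.delta)
      thus "(\<Sum>c\<in>F. gw \<beta> c (n + 1)) \<le> (1/2)^(n+1)" by simp
    qed
    show "summable (\<lambda>n. \<Sum>c\<in>F. gw \<beta> c (n + 1))" by (intro summable_sum gw_summable)
    show "summable (\<lambda>n. (1/2::real)^(n+1))" using geo_sums[of 1] by (rule sums_summable)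
  qed
  also have "\<dots> = 1" using sums_unique[OF geo_sums[of 1]] by simp
  finally show ?thesis .
qed

lemma RR_summable_on: "(\<lambda>c. RR \<beta> c 1) summable_on B"
proof (rule nonneg_bdd_above_summable_on)
  show "bdd_above (sum (\<lambda>c. RR \<beta> c 1) ` {F. F \<subseteq> B \<and> finite F})"
    unfolding bdd_above_def using RR_sum_le by blast
qed (simp add: RR_nonneg)

lemma coord_le:
  assumes p: "p \<ge> 1" and c: "c \<in> A - {z}"
  shows "\<bar>pp A z \<beta> c - pp A z \<alpha> c\<bar> \<le> lp_norm p (A - {z}) (\<lambda>c. pp A z \<beta> c - pp A z \<alpha> c)"
proof -
  define D where "D c = pp A z \<beta> c - pp A z \<alpha> c" for c
  have D: "D c = RR \<beta> c 1 - RR \<alpha> c 1" if "c \<in> A - {z}" for c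
    using that by (simp add: D_def pp_eq)
  have Dle: "\<bar>D c\<bar> powr p \<le> RR \<beta> c 1 + RR \<alpha> c 1" if "c \<in> A - {z}" for c
  proof -
    have b: "RR \<beta> c 1 \<le> 1" "RR \<alpha> c 1 \<le> 1" using RR_le[of \<beta> c 1] RR_le[of \<alpha> c 1] by auto
    have d1: "\<bar>D c\<bar> \<le> 1" using D[OF that] b RR_nonneg[of \<beta> c 1] RR_nonneg[of \<alpha> c 1] by auto
    have "\<bar>D c\<bar> powr p \<le> \<bar>D c\<bar> powr 1" by (rule powr_mono') (use p d1 in auto)
    also have "\<dots> \<le> \<bar>D c\<bar>" by (cases "D c = 0") auto
    also have "\<dots> \<le> RR \<beta> c 1 + RR \<alpha> c 1" using D[OF that] RR_nonneg[of \<beta> c 1] RR_nonneg[of \<alpha> c 1] by auto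
    finally show ?thesis .
  qed
  have sm: "(\<lambda>c. \<bar>D c\<bar> powr p) summable_on (A - {z})"
    by (rule summable_on_comparison_test[OF summable_on_add[OF RR_summable_on RR_summable_on]])
       (use Dle in auto)
  have "infsum (\<lambda>c. \<bar>D c\<bar> powr p) {c} \<le> infsum (\<lambda>c. \<bar>D c\<bar> powr p) (A - {z})"
    by (rule infsum_mono2) (use sm c in auto)
  hence "\<bar>D c\<bar> powr p \<le> infsum (\<lambda>c. \<bar>D c\<bar> powr p) (A - {z})" by simp
  hence "(\<bar>D c\<bar> powr p) powr (1/p) \<le> (infsum (\<lambda>c. \<bar>D c\<bar> powr p) (A - {z})) powr (1/p)"
    by (rule powr_mono2[rotated 2]) (use p in auto)
  moreover have "(\<bar>D c\<bar> powr p) powr (1/p) = \<bar>D c\<bar>" using p by (simp add: powr_powr)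
  ultimately show ?thesis unfolding lp_norm_def D_def by simp
qed


theorem proposition3p4:
  fixes A :: "'a set" and z a b :: 'a and p :: real
    and \<alpha>s :: "nat \<Rightarrow> nat \<Rightarrow> 'a" and \<alpha> :: "nat \<Rightarrow> 'a" and n0 :: nat
  assumes "infinite A" and "z \<in> A" and "p \<ge> 1"
    and "\<forall>n\<ge>1. inN A (\<alpha>s n)"
    and "n0 \<ge> 2" and "a \<in> A" and "b \<in> A" and "a \<noteq> b"
    and "inN A \<alpha>" and "\<alpha> n0 = a" and "\<forall>k>n0. \<alpha> k = b"
    and "(\<lambda>n. lp_norm p (A - {z}) (\<lambda>c. pp A z (\<alpha>s n) c - pp A z \<alpha> c)) \<longlonglongrightarrow> 0"
  shows "\<forall>m. m > n0 + 1 \<longrightarrow> (\<exists>lm\<ge>1. \<forall>l\<ge>lm.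
      ((\<forall>i\<in>{1..<n0}. \<alpha>s l i = \<alpha> i) \<and> \<alpha>s l n0 = a \<and> (\<forall>i\<in>{n0<..m}. \<alpha>s l i = b))
    \<or> ((\<forall>i\<in>{1..<n0}. \<alpha>s l i = \<alpha> i) \<and> \<alpha>s l n0 = b \<and> (\<forall>i\<in>{n0<..m}. \<alpha>s l i = a)))"
proof (intro allI impI)
  fix m assume m: "m > n0 + 1"
  have "\<forall>\<^sub>F n in sequentially. lp_norm p (A - {z}) (\<lambda>c. pp A z (\<alpha>s n) c - pp A z \<alpha> c) < (1/2)^(m+2)"
    by (rule order_tendstoD(2)[OF assms(12)]) simp
  then obtain N where N: "\<And>n. n \<ge> N \<Longrightarrow> lp_norm p (A - {z}) (\<lambda>c. pp A z (\<alpha>s n) c - pp A z \<alpha> c) < (1/2)^(m+2)"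
    unfolding eventually_sequentially by blast
  show "\<exists>lm\<ge>1. \<forall>l\<ge>lm.
      ((\<forall>i\<in>{1..<n0}. \<alpha>s l i = \<alpha> i) \<and> \<alpha>s l n0 = a \<and> (\<forall>i\<in>{n0<..m}. \<alpha>s l i = b))
    \<or> ((\<forall>i\<in>{1..<n0}. \<alpha>s l i = \<alpha> i) \<and> \<alpha>s l n0 = b \<and> (\<forall>i\<in>{n0<..m}. \<alpha>s l i = a))"
  proof (intro exI[of _ "max 1 N"] conjI allI impI)
    fix l assume l: "max 1 N \<le> l"
    have H: "\<forall>e\<in>A-{z}. \<bar>RR (\<alpha>s l) e 1 - RR \<alpha> e 1\<bar> < (1/2)^(m+2)"
    proof
      fix e assume e: "e \<in> A - {z}"
      have "\<bar>pp A z (\<alpha>s l) e - pp A z \<alpha> e\<bar> < (1/2)^(m+2)"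
        using coord_le[OF assms(3) e, of "\<alpha>s l" \<alpha>] N[of l] l by linarith
      thus "\<bar>RR (\<alpha>s l) e 1 - RR \<alpha> e 1\<bar> < (1/2)^(m+2)" using pp_eq[OF e] by simp
    qed
    show "((\<forall>i\<in>{1..<n0}. \<alpha>s l i = \<alpha> i) \<and> \<alpha>s l n0 = a \<and> (\<forall>i\<in>{n0<..m}. \<alpha>s l i = b))
    \<or> ((\<forall>i\<in>{1..<n0}. \<alpha>s l i = \<alpha> i) \<and> \<alpha>s l n0 = b \<and> (\<forall>i\<in>{n0<..m}. \<alpha>s l i = a))"
      by (rule comb[OF _ assms(9) assms(5) assms(8) assms(10) assms(11) m H])
         (use assms(4) l in auto)
  qed simp
qed

end
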